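(* Let $\Sigma$ be a finite nonempty set of $d\times d$ real matrices with nonnegative entries, and let $i\in\{1,\dots,d\}$. For every $B\ge 0$ there exists a constant $C$ such that for all positive integers $m,n$ with $|m-n|\le B$ and $\|\Sigma^n\|_{i,i}>0$, \[ \frac{\|\Sigma^m\|_{i,i}}{\|\Sigma^n\|_{i,i}}\le C . \]
   Context: For $n\ge1$, $\|\Sigma^n\|_{i,j}=\max_{A_1,\dots,A_n\in\Sigma}(A_1\cdots A_n)_{i,j}$. *)

theory Defs
  imports "HOL-Analysis.Analysis"
begin

definition mat_list_prod :: "(real^'n^'n) list \<Rightarrow> real^'n^'n" where
  "mat_list_prod As = foldr (\<lambda>A P. A ** P) As (mat 1)"

(* ||Sigma^n||_{i,j} = max over A_1,...,A_n in Sigma of (A_1 ... A_n)_{i,j}  (meant for n >= 1) *)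
definition joint_entry_max :: "(real^'n^'n) set \<Rightarrow> nat \<Rightarrow> 'n \<Rightarrow> 'n \<Rightarrow> real" where
  "joint_entry_max \<Sigma> n i j =
     Max {(mat_list_prod As) $ i $ j | As. set As \<subseteq> \<Sigma> \<and> length As = n}"

end

theory Submission
  imports Defs
begin

lemma mlp_Cons: "mat_list_prod (A # As) = A ** mat_list_prod As"
  by (simp add: mat_list_prod_def)

lemma mlp_Nil: "mat_list_prod [] = mat 1"
  by (simp add: mat_list_prod_def)

lemma mlp_append: "mat_list_prod (As @ Bs) = mat_list_prod As ** mat_list_prod Bs"
  by (induction As) (simp_all add: mlp_Cons mlp_Nil matrix_mul_assoc)

lemma mm_entry: "((P::real^'n::finite^'n) ** Q) $ k $ l = (\<Sum>j\<in>UNIV. P $ k $ j * Q $ j $ l)"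
  by (simp add: matrix_matrix_mult_def)

lemma mlp_nonneg:
  assumes "\<forall>A\<in>\<Sigma>. \<forall>k l. A $ k $ l \<ge> (0::real)" "set As \<subseteq> \<Sigma>"
  shows "0 \<le> mat_list_prod As $ k $ l"
  using assms(2)
proof (induction As arbitrary: k l)
  case Nil then show ?case by (simp add: mlp_Nil mat_def)
next
  case (Cons A As)
  then show ?case using assms(1)
    by (auto simp: mlp_Cons mm_entry intro!: sum_nonneg mult_nonneg_nonneg)
qed

lemma mm_entry_ge:
  fixes P Q :: "real^'n::finite^'n"
  assumes "\<forall>a b. 0 \<le> P $ a $ b" "\<forall>a b. 0 \<le> Q $ a $ b"
  shows "P $ k $ j * Q $ j $ l \<le> (P ** Q) $ k $ l"
  unfolding mm_entry
  by (rule member_le_sum) (use assms in \<open>auto intro: mult_nonneg_nonneg\<close>)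

lemma mm_entry_le:
  fixes P Q :: "real^'n::finite^'n"
  shows "\<exists>j. (P ** Q) $ k $ l \<le> real CARD('n) * (P $ k $ j * Q $ j $ l)"
proof -
  define f where "f j = P $ k $ j * Q $ j $ l" for j
  have "f ` UNIV \<noteq> {}" "finite (f ` UNIV)" by auto
  then obtain j where j: "f j = Max (f ` UNIV)" using Max_in by (metis imageE)
  have "(\<Sum>j'\<in>UNIV. f j') \<le> of_nat (card (UNIV::'n set)) * f j"
    by (rule sum_bounded_above) (simp add: j)
  then show ?thesis unfolding mm_entry f_def by auto
qed

lemma mlp_bound:
  fixes \<Sigma> :: "(real^'n::finite^'n) set"
  assumes "\<forall>A\<in>\<Sigma>. \<forall>k l. A $ k $ l \<ge> 0" "\<forall>A\<in>\<Sigma>. \<forall>k l. A $ k $ l \<le> M" "K \<ge> 1" "real CARD('n) * M \<le> K"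
    "set As \<subseteq> \<Sigma>"
  shows "mat_list_prod As $ k $ l \<le> K ^ length As"
  using assms(5)
proof (induction As arbitrary: k l)
  case Nil then show ?case using assms(3) by (simp add: mlp_Nil mat_def)
next
  case (Cons A As)
  have "mat_list_prod (A # As) $ k $ l = (\<Sum>j\<in>UNIV. A $ k $ j * mat_list_prod As $ j $ l)"
    by (simp add: mlp_Cons mm_entry)
  also have "\<dots> \<le> (\<Sum>j\<in>(UNIV::'n set). M * K ^ length As)"
  proof (rule sum_mono)
    fix j
    have "A \<in> \<Sigma>" "set As \<subseteq> \<Sigma>" using Cons.prems by auto
    then show "A $ k $ j * mat_list_prod As $ j $ l \<le> M * K ^ length As"
    proof (intro mult_mono)
      show "0 \<le> M" using \<open>A \<in> \<Sigma>\<close> assms(1,2) by (meson order_trans)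
    qed (use \<open>A \<in> \<Sigma>\<close> \<open>set As \<subseteq> \<Sigma>\<close> assms(1,2) Cons.IH mlp_nonneg[OF assms(1)] in auto)
  qed
  also have "\<dots> = (real CARD('n) * M) * K ^ length As" by simp
  also have "\<dots> \<le> K * K ^ length As"
    using assms(3,4) by (intro mult_right_mono) auto
  finally show ?case by simp
qed

lemma jem_ge:
  assumes "finite \<Sigma>" "set As \<subseteq> \<Sigma>" "length As = n"
  shows "mat_list_prod As $ k $ l \<le> joint_entry_max \<Sigma> n k l"
  unfolding joint_entry_max_def
  by (rule Max_ge) (use assms finite_lists_length_eq[OF assms(1), of n] in auto)

lemma jem_attained:
  assumes "finite \<Sigma>" "\<Sigma> \<noteq> {}"
  shows "\<exists>As. set As \<subseteq> \<Sigma> \<and> length As = n \<and> mat_list_prod As $ k $ l = joint_entry_max \<Sigma> n k l"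
proof -
  let ?S = "{(mat_list_prod As) $ k $ l | As. set As \<subseteq> \<Sigma> \<and> length As = n}"
  have fin: "finite ?S" using finite_lists_length_eq[OF assms(1), of n] by auto
  obtain A where "A \<in> \<Sigma>" using assms(2) by auto
  then have "?S \<noteq> {}" by (auto intro!: exI[of _ "replicate n A"])
  from Max_in[OF fin this] show ?thesis unfolding joint_entry_max_def by auto
qed



lemma semigroup_multiples:
  fixes L0 :: "nat set"
  assumes z: "0 \<in> L0" and add: "\<And>a b. a \<in> L0 \<Longrightarrow> b \<in> L0 \<Longrightarrow> a + b \<in> L0"
    and n0: "n0 \<in> L0" "n0 > 0"
  shows "\<exists>g>0. \<exists>P. (\<forall>x\<in>L0. \<forall>y\<in>L0. int g dvd int x - int y) \<and> (\<forall>q\<ge>P. q * g \<in> L0)"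
proof -
  have mult: "q * a \<in> L0" if "a \<in> L0" for a q
    by (induction q) (use z add that in auto)
  define D where "D = {int x - int y | x y. x \<in> L0 \<and> y \<in> L0}"
  have D_add: "u + v \<in> D" if uv: "u \<in> D" "v \<in> D" for u v
  proof -
    obtain x1 y1 x2 y2 where "u = int x1 - int y1" "v = int x2 - int y2"
      "x1 \<in> L0" "y1 \<in> L0" "x2 \<in> L0" "y2 \<in> L0" using uv unfolding D_def by blast
    then show ?thesis unfolding D_def
      by (intro CollectI exI[of _ "x1 + x2"] exI[of _ "y1 + y2"]) (auto intro: add)
  qed
  have D_mult: "c * u \<in> D" if uD: "u \<in> D" for u c
  proof -
    obtain x y where xy: "u = int x - int y" "x \<in> L0" "y \<in> L0" using uD unfolding D_def by blast
    show ?thesis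
    proof (cases "c \<ge> 0")
      case True
      then have "c * u = int (nat c * x) - int (nat c * y)" using xy by (simp add: right_diff_distrib)
      then show ?thesis unfolding D_def using mult xy by blast
    next
      case False
      then have "c * u = int (nat (-c) * y) - int (nat (-c) * x)" using xy by (simp add: right_diff_distrib)
      then show ?thesis unfolding D_def using mult xy by blast
    qed
  qed
  have "int n0 \<in> D" unfolding D_def using n0 z by force
  define g where "g = (LEAST z::nat. z > 0 \<and> int z \<in> D)"
  have gex: "n0 > 0 \<and> int n0 \<in> D" using n0 \<open>int n0 \<in> D\<close> by auto
  have g: "g > 0 \<and> int g \<in> D" unfolding g_def by (rule LeastI[of _ n0]) (use gex in auto)
  have dvd: "int g dvd u" if "u \<in> D" for u
  proof -
    define r where "r = u mod int g"
    have r: "r = u + (- (u div int g)) * int g" unfolding r_def by (simp add: minus_div_mult_eq_mod[symmetric])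
    have "r \<in> D" unfolding r using D_add D_mult g that by blast
    have "0 \<le> r" "r < int g" using g unfolding r_def by auto
    show ?thesis
    proof (rule ccontr)
      assume "\<not> int g dvd u"
      then have "r > 0" using \<open>0 \<le> r\<close> unfolding r_def by (simp add: dvd_eq_mod_eq_0)
      then have "nat r > 0 \<and> int (nat r) \<in> D" using \<open>r \<in> D\<close> by auto
      then have "g \<le> nat r" unfolding g_def by (rule Least_le)
      then show False using \<open>r < int g\<close> \<open>r > 0\<close> by linarith
    qed
  qed
  obtain x y where xy: "int x - int y = int g" "x \<in> L0" "y \<in> L0"
  proof -
    from g have "int g \<in> D" by simp
    then obtain x y where "int g = int x - int y" "x \<in> L0" "y \<in> L0" unfolding D_def by blast
    then show ?thesis using that by simp
  qed
  have "int y - int 0 \<in> D" unfolding D_def using xy z by blast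
  then have "int g dvd int y" using dvd by (metis diff_zero of_nat_0)
  then obtain p where yp: "y = p * g" by (metis dvd_def mult.commute of_nat_dvd_iff)
  have x: "x = g + y" using xy by linarith
  have big: "q * g \<in> L0" if "q \<ge> p * p" for q
  proof (cases "p = 0")
    case True
    then have "x = g" using x yp by simp
    then show ?thesis using mult xy by metis
  next
    case False
    define a where "a = q div p"
    define b where "b = q mod p"
    have q: "q = a * p + b" unfolding a_def b_def by simp
    have "b < p" unfolding b_def using False by simp
    have "a \<ge> p" unfolding a_def using that False
      by (metis div_le_mono nonzero_mult_div_cancel_right)
    have "q * g = (a - b) * y + b * x"
    proof -
      have "(a - b) * y + b * x = (a - b) * p * g + b * g + b * p * g" using x yp by (simp add: algebra_simps)
      also have "\<dots> = ((a - b) * p + b * p + b) * g" by (simp add: algebra_simps)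
      also have "(a - b) * p + b * p = a * p" using \<open>a \<ge> p\<close> \<open>b < p\<close>
        by (metis add_mult_distrib le_add_diff_inverse2 less_imp_le_nat order_trans)
      finally show ?thesis using q by simp
    qed
    then show ?thesis using mult add xy by metis
  qed
  have "\<forall>x\<in>L0. \<forall>y\<in>L0. int g dvd int x - int y" using dvd unfolding D_def by blast
  then show ?thesis using g big by blast
qed


definition reach :: "(real^'n::finite^'n) set \<Rightarrow> 'n \<Rightarrow> 'n \<Rightarrow> nat \<Rightarrow> bool" where
  "reach \<Sigma> k l s \<longleftrightarrow> (\<exists>As. set As \<subseteq> \<Sigma> \<and> length As = s \<and> 0 < mat_list_prod As $ k $ l)"

lemma reach_refl: "reach \<Sigma> k k 0"
  unfolding reach_def by (intro exI[of _ "[]"]) (simp add: mlp_Nil mat_def)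

lemma reach_trans:
  assumes nn: "\<forall>A\<in>\<Sigma>. \<forall>k l. A $ k $ l \<ge> (0::real)"
    and "reach \<Sigma> a b s" "reach \<Sigma> b c t"
  shows "reach \<Sigma> a c (s + t)"
proof -
  obtain As where As: "set As \<subseteq> \<Sigma>" "length As = s" "0 < mat_list_prod As $ a $ b"
    using assms(2) unfolding reach_def by blast
  obtain Bs where Bs: "set Bs \<subseteq> \<Sigma>" "length Bs = t" "0 < mat_list_prod Bs $ b $ c"
    using assms(3) unfolding reach_def by blast
  have "mat_list_prod As $ a $ b * mat_list_prod Bs $ b $ c \<le> mat_list_prod (As @ Bs) $ a $ c"
    unfolding mlp_append
    by (rule mm_entry_ge) (use mlp_nonneg[OF nn] As Bs in auto)
  moreover have "0 < mat_list_prod As $ a $ b * mat_list_prod Bs $ b $ c" using As Bs by simp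
  ultimately have "0 < mat_list_prod (As @ Bs) $ a $ c" by linarith
  then show ?thesis unfolding reach_def using As Bs
    by (intro exI[of _ "As @ Bs"]) auto
qed

lemma jem_nonneg:
  assumes "finite \<Sigma>" "\<Sigma> \<noteq> {}" "\<forall>A\<in>\<Sigma>. \<forall>k l. A $ k $ l \<ge> (0::real)"
  shows "0 \<le> joint_entry_max \<Sigma> n k l"
  using jem_attained[OF assms(1,2), of n k l] mlp_nonneg[OF assms(3)] by metis

lemma reach_jem:
  assumes "finite \<Sigma>" "\<Sigma> \<noteq> {}" "\<forall>A\<in>\<Sigma>. \<forall>k l. A $ k $ l \<ge> (0::real)"
  shows "reach \<Sigma> k l s \<longleftrightarrow> 0 < joint_entry_max \<Sigma> s k l"
proof
  assume "reach \<Sigma> k l s"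
  then show "0 < joint_entry_max \<Sigma> s k l" unfolding reach_def
    using jem_ge[OF assms(1)] by (meson less_le_trans)
next
  assume "0 < joint_entry_max \<Sigma> s k l"
  then show "reach \<Sigma> k l s" unfolding reach_def
    using jem_attained[OF assms(1,2), of s k l] by metis
qed

theorem proposition1:
  fixes \<Sigma> :: "(real^'n^'n) set" and i :: 'n
  assumes "finite \<Sigma>" and "\<Sigma> \<noteq> {}"
    and "\<forall>A\<in>\<Sigma>. \<forall>k l. A $ k $ l \<ge> 0"
  shows "\<forall>B::real. B \<ge> 0 \<longrightarrow> (\<exists>C::real. \<forall>m n::nat.
           m > 0 \<and> n > 0 \<and> \<bar>real m - real n\<bar> \<le> B \<and> joint_entry_max \<Sigma> n i i > 0
           \<longrightarrow> joint_entry_max \<Sigma> m i i / joint_entry_max \<Sigma> n i i \<le> C)"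
proof (intro allI impI)
  fix B :: real assume B0: "B \<ge> 0"
  note fin = assms(1) and ne = assms(2) and nn = assms(3)
  note RJ = reach_jem[OF fin ne nn]
  let ?J = "joint_entry_max \<Sigma>"
  show "\<exists>C::real. \<forall>m n::nat.
           m > 0 \<and> n > 0 \<and> \<bar>real m - real n\<bar> \<le> B \<and> ?J n i i > 0
           \<longrightarrow> ?J m i i / ?J n i i \<le> C"
  proof (cases "\<exists>n0>0. reach \<Sigma> i i n0")
    case False
    show ?thesis
    proof (intro exI[of _ 0] allI impI)
      fix m n :: nat
      assume H: "0 < m \<and> 0 < n \<and> \<bar>real m - real n\<bar> \<le> B \<and> 0 < ?J n i i"
      then have "reach \<Sigma> i i n" using RJ by simp
      then show "?J m i i / ?J n i i \<le> 0" using False H by blast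
    qed
  next
    case True
    then obtain n0 where n0: "n0 > 0" "reach \<Sigma> i i n0" by blast
    define L0 where "L0 = {s. reach \<Sigma> i i s}"
    have "\<exists>g>0. \<exists>P. (\<forall>x\<in>L0. \<forall>y\<in>L0. int g dvd int x - int y) \<and> (\<forall>q\<ge>P. q * g \<in> L0)"
      by (rule semigroup_multiples[of L0 n0])
        (use reach_refl reach_trans[OF nn] n0 in \<open>auto simp: L0_def\<close>)
    then obtain g P where g: "g > 0" and gdvd: "\<forall>x\<in>L0. \<forall>y\<in>L0. int g dvd int x - int y"
      and big: "\<forall>q\<ge>P. q * g \<in> L0" by blast
    define s0 where "s0 k = (LEAST s. reach \<Sigma> k i s)" for k
    define s0sum where "s0sum = (\<Sum>k\<in>UNIV. if (\<exists>s. reach \<Sigma> k i s) then s0 k else 0)"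
    have s0le: "s0 k \<le> s0sum" if "\<exists>s. reach \<Sigma> k i s" for k
    proof -
      have "(if (\<exists>s. reach \<Sigma> k i s) then s0 k else 0) \<le> s0sum"
        unfolding s0sum_def by (rule member_le_sum) auto
      then show ?thesis using that by simp
    qed
    have s0r: "reach \<Sigma> k i (s0 k)" if "\<exists>s. reach \<Sigma> k i s" for k
      unfolding s0_def using that by (metis LeastI_ex)
    define B' where "B' = nat \<lceil>B\<rceil>"
    have BB': "B \<le> real B'" unfolding B'_def by linarith
    define S where "S = B' + s0sum + P * g"
    define M where "M = (\<Sum>A\<in>\<Sigma>. \<Sum>k\<in>UNIV. \<Sum>l\<in>UNIV. A $ k $ l)"
    have Mge: "\<forall>A\<in>\<Sigma>. \<forall>k l. A $ k $ l \<le> M"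
    proof (intro ballI allI)
      fix A k l assume A: "A \<in> \<Sigma>"
      have "A $ k $ l \<le> (\<Sum>l\<in>UNIV. A $ k $ l)"
        by (rule member_le_sum) (use A nn in auto)
      also have "\<dots> \<le> (\<Sum>k\<in>UNIV. \<Sum>l\<in>UNIV. A $ k $ l)"
        by (rule member_le_sum) (use A nn in \<open>auto intro: sum_nonneg\<close>)
      also have "\<dots> \<le> M" unfolding M_def
        by (rule member_le_sum) (use A nn fin in \<open>auto intro!: sum_nonneg\<close>)
      finally show "A $ k $ l \<le> M" .
    qed
    define K where "K = max 1 (real CARD('n) * M)"
    have K1: "K \<ge> 1" and KM: "real CARD('n) * M \<le> K" unfolding K_def by auto
    note bnd = mlp_bound[OF nn Mge K1 KM]
    define T where "T = S + B'"
    define c where "c = Min ({?J t k i | t k. t \<le> T \<and> ?J t k i > 0} \<union> {1})"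
    have finc: "finite ({?J t k i | t k. t \<le> T \<and> ?J t k i > 0} \<union> {1})"
    proof -
      have "{?J t k i | t k. t \<le> T \<and> ?J t k i > 0} \<subseteq> (\<lambda>(t, k). ?J t k i) ` ({..T} \<times> UNIV)"
        by auto
      moreover have "finite ((\<lambda>(t, k). ?J t k i) ` ({..T} \<times> (UNIV::'n set)))" by simp
      ultimately have "finite {?J t k i | t k. t \<le> T \<and> ?J t k i > 0}" by (rule finite_subset)
      then show ?thesis by simp
    qed
    have cpos: "c > 0" unfolding c_def using finc by (subst Min_gr_iff) auto
    have cle: "c \<le> ?J t k i" if "t \<le> T" "?J t k i > 0" for t k
      unfolding c_def using finc that by (intro Min_le) auto
    define C where "C = real CARD('n) * K ^ S / c + K ^ S / c"
    have KS0: "0 \<le> K ^ S" using K1 by simp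
    have C1: "K ^ S / c \<le> C" and C2: "real CARD('n) * K ^ S / c \<le> C"
      unfolding C_def using KS0 cpos by auto
    show ?thesis
    proof (intro exI[of _ C] allI impI)
      fix m n :: nat
      assume H: "0 < m \<and> 0 < n \<and> \<bar>real m - real n\<bar> \<le> B \<and> 0 < ?J n i i"
      have mn: "m \<le> n + B'" "n \<le> m + B'" using H BB' by linarith+
      have Jn: "?J n i i > 0" using H by simp
      have Jm0: "0 \<le> ?J m i i" by (rule jem_nonneg[OF fin ne nn])
      show "?J m i i / ?J n i i \<le> C"
      proof (cases "m < S")
        case True
        have "n \<le> T" using mn True unfolding T_def by linarith
        then have cn: "c \<le> ?J n i i" using cle Jn by blast
        obtain As where As: "set As \<subseteq> \<Sigma>" "length As = m" "mat_list_prod As $ i $ i = ?J m i i"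
          using jem_attained[OF fin ne] by blast
        have "?J m i i \<le> K ^ m" using bnd[OF As(1)] As by metis
        also have "\<dots> \<le> K ^ S" using K1 True by (intro power_increasing) auto
        finally have "?J m i i \<le> K ^ S" .
        then have "?J m i i / ?J n i i \<le> K ^ S / c"
          using cn cpos KS0 by (intro frac_le) auto
        then show ?thesis using C1 by linarith
      next
        case False
        then have mS: "S \<le> m" by simp
        show ?thesis
        proof (cases "?J m i i = 0")
          case True
          then show ?thesis using C1 KS0 cpos
            by (metis div_0 divide_nonneg_pos order_trans)
        next
          case False
          then have Jmp: "?J m i i > 0" using Jm0 by simp
          obtain As where As: "set As \<subseteq> \<Sigma>" "length As = m" "mat_list_prod As $ i $ i = ?J m i i"
            using jem_attained[OF fin ne] by blast
          define Xs where "Xs = take (m - S) As"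
          define Ys where "Ys = drop (m - S) As"
          have AXY: "As = Xs @ Ys" unfolding Xs_def Ys_def by simp
          have lX: "length Xs = m - S" and lY: "length Ys = S"
            unfolding Xs_def Ys_def using As mS by auto
          have sX: "set Xs \<subseteq> \<Sigma>" and sY: "set Ys \<subseteq> \<Sigma>"
            using As(1) AXY by auto
          define X where "X = mat_list_prod Xs"
          define Y where "Y = mat_list_prod Ys"
          have Xn: "\<forall>a b. 0 \<le> X $ a $ b" unfolding X_def using mlp_nonneg[OF nn sX] by blast
          have Yn: "\<forall>a b. 0 \<le> Y $ a $ b" unfolding Y_def using mlp_nonneg[OF nn sY] by blast
          obtain k where k: "?J m i i \<le> real CARD('n) * (X $ i $ k * Y $ k $ i)"
            using mm_entry_le[of X Y i i] As(3) AXY mlp_append unfolding X_def Y_def by metis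
          have XYp: "X $ i $ k * Y $ k $ i > 0"
          proof (rule ccontr)
            assume "\<not> ?thesis"
            then have "real CARD('n) * (X $ i $ k * Y $ k $ i) \<le> 0"
              by (simp add: mult_nonneg_nonpos)
            then show False using k Jmp by linarith
          qed
          have "X $ i $ k \<noteq> 0" "Y $ k $ i \<noteq> 0" using XYp by auto
          then have Xp: "X $ i $ k > 0" and Yp: "Y $ k $ i > 0"
            using Xn Yn by (simp_all add: less_le)
          have rik: "reach \<Sigma> i k (m - S)" unfolding reach_def X_def
            using sX lX Xp X_def by blast
          have rki: "reach \<Sigma> k i S" unfolding reach_def
            using sY lY Yp Y_def by blast
          have ex: "\<exists>s. reach \<Sigma> k i s" using rki by blast
          define t where "t = n + S - m"
          have mnS: "m \<le> n + S" using mn unfolding S_def by linarith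
          have a1: "(m - S) + S \<in> L0" unfolding L0_def using reach_trans[OF nn rik rki] by simp
          have a2: "(m - S) + s0 k \<in> L0" unfolding L0_def using reach_trans[OF nn rik s0r[OF ex]] by simp
          have a3: "n \<in> L0" "m \<in> L0" unfolding L0_def using RJ Jn Jmp by auto
          have d1: "int g dvd int ((m - S) + S) - int ((m - S) + s0 k)" using gdvd a1 a2 by blast
          have d2: "int g dvd int n - int m" using gdvd a3 by blast
          have teq: "int t - int (s0 k) = (int ((m - S) + S) - int ((m - S) + s0 k)) + (int n - int m)"
            unfolding t_def using mS mnS by simp
          have "int g dvd int t - int (s0 k)" unfolding teq using d1 d2 by (rule dvd_add)
          then obtain q where q: "int t - int (s0 k) = int g * q" by (elim dvdE)
          have s0k: "s0 k \<le> s0sum" using s0le ex by blast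
          have tge: "t \<ge> s0 k + P * g" unfolding t_def S_def using mn s0k by linarith
          have "int (s0 k + P * g) \<le> int t" using tge by (simp only: of_nat_le_iff)
          then have "int g * q \<ge> int g * int P" using q by (simp add: algebra_simps)
          then have qP: "q \<ge> int P" using g by simp
          have "int t = int (s0 k + nat q * g)" using q qP by (simp add: mult.commute)
          then have tq: "t = s0 k + nat q * g" by (simp only: of_nat_eq_iff)
          have "nat q * g \<in> L0" using big qP by simp
          then have rt: "reach \<Sigma> k i t" unfolding tq L0_def using reach_trans[OF nn s0r[OF ex]] by blast
          have tT: "t \<le> T" unfolding t_def T_def using mn by linarith
          have cJ: "c \<le> ?J t k i" using cle[OF tT] RJ rt by blast
          obtain Zs where Zs: "set Zs \<subseteq> \<Sigma>" "length Zs = t" "mat_list_prod Zs $ k $ i = ?J t k i"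
            using jem_attained[OF fin ne] by blast
          define Z where "Z = mat_list_prod Zs"
          have Zn: "\<forall>a b. 0 \<le> Z $ a $ b" unfolding Z_def using mlp_nonneg[OF nn Zs(1)] by blast
          have len: "length (Xs @ Zs) = n" using lX Zs(2) mS mnS unfolding t_def by simp
          have "X $ i $ k * Z $ k $ i \<le> (X ** Z) $ i $ i" by (rule mm_entry_ge[OF Xn Zn])
          also have "\<dots> \<le> ?J n i i" using jem_ge[OF fin _ len, of i i] sX Zs(1)
            unfolding X_def Z_def mlp_append by auto
          finally have low: "X $ i $ k * c \<le> ?J n i i"
            using cJ Zs(3) Xp unfolding Z_def
            by (smt (verit) mult_left_mono)
          have Yb: "Y $ k $ i \<le> K ^ S" unfolding Y_def using bnd[OF sY] lY by metis
          have "?J m i i \<le> real CARD('n) * (X $ i $ k * K ^ S)"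
            using k Yb Xp by (smt (verit) mult_left_mono of_nat_0_le_iff)
          then have "?J m i i / ?J n i i \<le> (real CARD('n) * (X $ i $ k * K ^ S)) / (X $ i $ k * c)"
            using low Xp cpos KS0 by (intro frac_le) auto
          also have "\<dots> = real CARD('n) * K ^ S / c" using Xp by (simp add: field_simps)
          finally show ?thesis using C2 by linarith
        qed
      qed
    qed
  qed
qed

end
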